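(* Let $\{X_i:i\in I\}$ be a collection of random variables on $\Omega$ and let $P$ assign to each $X_i$ an extended-real marginal prevision $P(X_i)$. Then $P$ is extended-coherent if and only if the collection $\{P(X_i):i\in I\}$ is coherent$_1$.
   Context: Let $\Omega$ be a nonempty set; random variables are real-valued functions on $\Omega$. A marginal prevision $P(X)$ is an extended real number. Coherence$_1$ (marginal case): $\{P(X_i):i\in I\}$ is coherent$_1$ if for every finite $\{i_1,\dots,i_n\}\subseteq I$, all real $\alpha_1,\dots,\alpha_n$ with $\alpha_j\ge0$ whenever $P(X_{i_j})=+\infty$ and $\alpha_j\le 0$ whenever $P(X_{i_j})=-\infty$, and all real $c_1,\dots,c_n$ with $c_j=P(X_{i_j})$ whenever $P(X_{i_j})$ is finite, we have $\sup_\omega\sum_{j=1}^n\alpha_j[X_{i_j}(\omega)-c_j]\ge 0$. Extended-coherence: $P$ is extended-coherent if \[\inf_{\omega\in\Omega}\sum_{j=1}^n\alpha_jX_{i_j}(\omega)\le\sum_{j=1}^n\alpha_jP(X_{i_j})\le\sup_{\omega\in\Omega}\sum_{j=1}^n\alpha_jX_{i_j}(\omega)\] for every finite $n$, all $i_1,\dots,i_n\in I$, and all real $\alpha_1,\dots,\alpha_n$ such that all infinite terms of the form $\alpha_jP(X_{i_j})$ have the same sign. *)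

theory Defs
  imports "HOL-Analysis.Analysis" "HOL-Library.Extended_Real"
begin

(* Omega is the universe of type 'w (nonempty), the index set I is the universe of type 'i.
   X i is the random variable X_i : Omega -> real, P i is the extended-real prevision P(X_i). *)

definition coherent1 :: "('i \<Rightarrow> 'w \<Rightarrow> real) \<Rightarrow> ('i \<Rightarrow> ereal) \<Rightarrow> bool" where
  "coherent1 X P \<longleftrightarrow>
     (\<forall>J :: 'i set. \<forall>\<alpha> :: 'i \<Rightarrow> real. \<forall>c :: 'i \<Rightarrow> real.
        finite J \<longrightarrow>
        (\<forall>j\<in>J. P j = \<infinity> \<longrightarrow> \<alpha> j \<ge> 0) \<longrightarrow>
        (\<forall>j\<in>J. P j = -\<infinity> \<longrightarrow> \<alpha> j \<le> 0) \<longrightarrow>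
        (\<forall>j\<in>J. \<bar>P j\<bar> \<noteq> \<infinity> \<longrightarrow> ereal (c j) = P j) \<longrightarrow>
        (SUP \<omega>. ereal (\<Sum>j\<in>J. \<alpha> j * (X j \<omega> - c j))) \<ge> 0)"

definition extended_coherent :: "('i \<Rightarrow> 'w \<Rightarrow> real) \<Rightarrow> ('i \<Rightarrow> ereal) \<Rightarrow> bool" where
  "extended_coherent X P \<longleftrightarrow>
     (\<forall>n :: nat. \<forall>idx :: nat \<Rightarrow> 'i. \<forall>\<alpha> :: nat \<Rightarrow> real.
        (\<forall>j<n. \<forall>k<n. \<bar>ereal (\<alpha> j) * P (idx j)\<bar> = \<infinity> \<longrightarrow> \<bar>ereal (\<alpha> k) * P (idx k)\<bar> = \<infinity> \<longrightarrow>
            ereal (\<alpha> j) * P (idx j) = ereal (\<alpha> k) * P (idx k)) \<longrightarrow>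
        (INF \<omega>. ereal (\<Sum>j<n. \<alpha> j * X (idx j) \<omega>)) \<le> (\<Sum>j<n. ereal (\<alpha> j) * P (idx j)) \<and>
        (\<Sum>j<n. ereal (\<alpha> j) * P (idx j)) \<le> (SUP \<omega>. ereal (\<Sum>j<n. \<alpha> j * X (idx j) \<omega>)))"

end

theory Submission
  imports Defs
begin

lemma sum_group_mult:
  fixes idx :: "nat \<Rightarrow> 'i" and f :: "'i \<Rightarrow> real"
  shows "(\<Sum>j<n. \<alpha> j * f (idx j)) =
    (\<Sum>i\<in>idx ` {..<n}. (\<Sum>j\<in>{j\<in>{..<n}. idx j = i}. \<alpha> j) * f i)"
proof -
  have "(\<Sum>i\<in>idx ` {..<n}. (\<Sum>j\<in>{j\<in>{..<n}. idx j = i}. \<alpha> j) * f i)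
      = (\<Sum>i\<in>idx ` {..<n}. (\<Sum>j\<in>{j\<in>{..<n}. idx j = i}. \<alpha> j * f (idx j)))"
    by (rule sum.cong) (auto simp: sum_distrib_right)
  also have "\<dots> = (\<Sum>j<n. \<alpha> j * f (idx j))"
    by (rule sum.group) (auto intro: finite_imageI)
  finally show ?thesis by simp
qed

lemma lemA:
  fixes X :: "'i \<Rightarrow> 'w \<Rightarrow> real" and P :: "'i \<Rightarrow> ereal" and idx :: "nat \<Rightarrow> 'i"
  assumes coh: "coherent1 X P"
    and s1: "\<And>j. j < n \<Longrightarrow> P (idx j) = \<infinity> \<Longrightarrow> \<alpha> j \<ge> 0"
    and s2: "\<And>j. j < n \<Longrightarrow> P (idx j) = -\<infinity> \<Longrightarrow> \<alpha> j \<le> 0"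
    and dc: "\<And>i. \<bar>P i\<bar> \<noteq> \<infinity> \<Longrightarrow> ereal (d i) = P i"
    and e: "e > 0"
  shows "\<exists>\<omega>. (\<Sum>j<n. \<alpha> j * (X (idx j) \<omega> - d (idx j))) > -e"
proof -
  define J where "J = idx ` {..<n}"
  define \<beta> where "\<beta> i = (\<Sum>j\<in>{j\<in>{..<n}. idx j = i}. \<alpha> j)" for i
  have "finite J" unfolding J_def by (rule finite_imageI) simp
  moreover have "\<forall>i\<in>J. P i = \<infinity> \<longrightarrow> \<beta> i \<ge> 0"
    unfolding J_def \<beta>_def using s1 by (auto intro!: sum_nonneg)
  moreover have "\<forall>i\<in>J. P i = -\<infinity> \<longrightarrow> \<beta> i \<le> 0"
    unfolding J_def \<beta>_def using s2 by (auto intro!: sum_nonpos)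
  moreover have "\<forall>i\<in>J. \<bar>P i\<bar> \<noteq> \<infinity> \<longrightarrow> ereal (d i) = P i" using dc by auto
  ultimately have "(SUP \<omega>. ereal (\<Sum>i\<in>J. \<beta> i * (X i \<omega> - d i))) \<ge> 0"
    using coh unfolding coherent1_def by blast
  hence "ereal (-e) < (SUP \<omega>. ereal (\<Sum>i\<in>J. \<beta> i * (X i \<omega> - d i)))"
  proof -
    have "ereal (-e) < 0" using e by simp
    thus ?thesis using \<open>_ \<ge> 0\<close> by (rule less_le_trans)
  qed
  then obtain \<omega> where "ereal (-e) < ereal (\<Sum>i\<in>J. \<beta> i * (X i \<omega> - d i))"
    by (auto simp: less_SUP_iff)
  moreover have "(\<Sum>i\<in>J. \<beta> i * (X i \<omega> - d i)) = (\<Sum>j<n. \<alpha> j * (X (idx j) \<omega> - d (idx j)))"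
    unfolding J_def \<beta>_def by (rule sum_group_mult[symmetric])
  ultimately show ?thesis by auto
qed

definition d0 :: "('i \<Rightarrow> ereal) \<Rightarrow> 'i \<Rightarrow> real" where
  "d0 P i = (if \<bar>P i\<bar> \<noteq> \<infinity> then real_of_ereal (P i) else 0)"

lemma d0_ok: "\<bar>P i\<bar> \<noteq> \<infinity> \<Longrightarrow> ereal (d0 P i) = P i"
  unfolding d0_def by (cases "P i") auto

lemma up_inf:
  fixes X :: "'i \<Rightarrow> 'w \<Rightarrow> real" and P :: "'i \<Rightarrow> ereal" and idx :: "nat \<Rightarrow> 'i"
  assumes coh: "coherent1 X P"
    and nm: "\<And>j. j < n \<Longrightarrow> ereal (\<alpha> j) * P (idx j) \<noteq> -\<infinity>"
    and j0: "j0 < n" "ereal (\<alpha> j0) * P (idx j0) = \<infinity>"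
  shows "\<exists>\<omega>. (\<Sum>j<n. \<alpha> j * X (idx j) \<omega>) > M"
proof -
  have s1: "\<alpha> j \<ge> 0" if "j < n" "P (idx j) = \<infinity>" for j
    using nm[OF that(1)] that(2) by (cases "\<alpha> j \<ge> 0") (auto simp: ereal_mult_infty)
  have s2: "\<alpha> j \<le> 0" if "j < n" "P (idx j) = -\<infinity>" for j
    using nm[OF that(1)] that(2) by (cases "\<alpha> j \<le> 0") (auto simp: ereal_mult_infty)
  define i0 where "i0 = idx j0"
  define A where "A = (\<Sum>j\<in>{j\<in>{..<n}. idx j = i0}. \<alpha> j)"
  have j0in: "j0 \<in> {j\<in>{..<n}. idx j = i0}" using j0(1) unfolding i0_def by simp
  have Pinf: "\<bar>P i0\<bar> = \<infinity>" and Anz: "A \<noteq> 0"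
  proof -
    show "\<bar>P i0\<bar> = \<infinity>" using j0(2) unfolding i0_def by (cases "P (idx j0)") auto
  next
    show "A \<noteq> 0"
    proof (cases "P i0 = \<infinity>")
      case True
      hence a0: "\<alpha> j0 > 0" using j0(2) unfolding i0_def
        by (cases "\<alpha> j0 > 0") (auto simp: ereal_mult_infty split: if_splits)
      have "A \<ge> \<alpha> j0" unfolding A_def
        by (rule member_le_sum[OF j0in]) (use s1 True in auto)
      thus ?thesis using a0 by simp
    next
      case False
      hence Pm: "P i0 = -\<infinity>" using j0(2) unfolding i0_def by (cases "P (idx j0)") auto
      hence a0: "\<alpha> j0 < 0" using j0(2) unfolding i0_def
        by (cases "\<alpha> j0 < 0") (auto simp: ereal_mult_infty split: if_splits)
      have "- A \<ge> - \<alpha> j0" unfolding A_def sum_negf[symmetric]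
        by (rule member_le_sum[OF j0in]) (use s2 Pm in auto)
      thus ?thesis using a0 by simp
    qed
  qed
  define C where "C = (\<Sum>j<n. \<alpha> j * d0 P (idx j))"
  define K where "K = (M + 1 - C) / A"
  define d where "d i = d0 P i + (if i = i0 then K else 0)" for i
  have dc: "ereal (d i) = P i" if "\<bar>P i\<bar> \<noteq> \<infinity>" for i
  proof -
    have "i \<noteq> i0" using that Pinf by auto
    thus ?thesis using d0_ok[of P i, OF that] unfolding d_def by simp
  qed
  have "\<exists>\<omega>. (\<Sum>j<n. \<alpha> j * (X (idx j) \<omega> - d (idx j))) > -1"
    by (rule lemA[where n=n and idx=idx and \<alpha>=\<alpha> and d=d and e="1::real" and X=X and P=P, OF coh s1 s2 dc zero_less_one])
  then obtain \<omega> where \<omega>: "(\<Sum>j<n. \<alpha> j * (X (idx j) \<omega> - d (idx j))) > -1" by blast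
  have pt: "\<alpha> j * (X (idx j) \<omega> - d (idx j)) = \<alpha> j * X (idx j) \<omega> - \<alpha> j * d0 P (idx j) - \<alpha> j * (if idx j = i0 then K else 0)" for j
    unfolding d_def by (simp add: algebra_simps)
  have "(\<Sum>j<n. \<alpha> j * (X (idx j) \<omega> - d (idx j)))
      = (\<Sum>j<n. \<alpha> j * X (idx j) \<omega>) - C - (\<Sum>j<n. \<alpha> j * (if idx j = i0 then K else 0))"
    unfolding pt C_def by (simp add: sum_subtractf)
  also have "(\<Sum>j<n. \<alpha> j * (if idx j = i0 then K else 0)) = (\<Sum>j\<in>{j\<in>{..<n}. idx j = i0}. \<alpha> j * K)"
    by (subst sum.inter_filter) (auto intro!: sum.cong)
  also have "\<dots> = A * K" unfolding A_def by (simp add: sum_distrib_right)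
  also have "A * K = M + 1 - C" unfolding K_def using Anz by simp
  finally show ?thesis using \<omega> by (intro exI[of _ \<omega>]) linarith
qed

lemma up_fin:
  fixes X :: "'i \<Rightarrow> 'w \<Rightarrow> real" and P :: "'i \<Rightarrow> ereal" and idx :: "nat \<Rightarrow> 'i"
  assumes coh: "coherent1 X P"
    and fin: "\<And>j. j < n \<Longrightarrow> \<bar>ereal (\<alpha> j) * P (idx j)\<bar> \<noteq> \<infinity>"
    and e: "e > 0"
  shows "\<exists>\<omega>. (\<Sum>j<n. \<alpha> j * X (idx j) \<omega>) > (\<Sum>j<n. \<alpha> j * d0 P (idx j)) - e"
proof -
  have zz: "\<bar>ereal a * p\<bar> \<noteq> \<infinity> \<Longrightarrow> \<bar>p::ereal\<bar> = \<infinity> \<Longrightarrow> a = 0" for a p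
    by (cases p; cases "a = 0") (auto simp: ereal_mult_infty split: if_splits)
  have z: "\<alpha> j = 0" if "j < n" "\<bar>P (idx j)\<bar> = \<infinity>" for j
    using zz[OF fin[OF that(1)] that(2)] .
  have s1: "\<alpha> j \<ge> 0" if "j < n" "P (idx j) = \<infinity>" for j using z[OF that(1)] that(2) by simp
  have s2: "\<alpha> j \<le> 0" if "j < n" "P (idx j) = -\<infinity>" for j using z[OF that(1)] that(2) by simp
  have dc: "\<And>i. \<bar>P i\<bar> \<noteq> \<infinity> \<Longrightarrow> ereal (d0 P i) = P i" by (rule d0_ok)
  obtain \<omega> where \<omega>: "(\<Sum>j<n. \<alpha> j * (X (idx j) \<omega> - d0 P (idx j))) > -e"
    using lemA[where d="d0 P" and n=n and idx=idx and \<alpha>=\<alpha> and e=e and X=X and P=P, OF coh s1 s2 dc e] by blast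
  have "(\<Sum>j<n. \<alpha> j * (X (idx j) \<omega> - d0 P (idx j))) = (\<Sum>j<n. \<alpha> j * X (idx j) \<omega>) - (\<Sum>j<n. \<alpha> j * d0 P (idx j))"
    by (simp add: right_diff_distrib sum_subtractf)
  thus ?thesis using \<omega> by (intro exI[of _ \<omega>]) linarith
qed

lemma sum_fin_eq:
  fixes idx :: "nat \<Rightarrow> 'i"
  assumes fin: "\<And>j. j < n \<Longrightarrow> \<bar>ereal (\<alpha> j) * P (idx j)\<bar> \<noteq> \<infinity>"
  shows "(\<Sum>j<n. ereal (\<alpha> j) * P (idx j)) = ereal (\<Sum>j<n. \<alpha> j * d0 P (idx j))"
proof -
  have "ereal (\<alpha> j) * P (idx j) = ereal (\<alpha> j * d0 P (idx j))" if "j < n" for j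
    using fin[OF that] unfolding d0_def
    by (cases "P (idx j)"; cases "\<alpha> j = 0"; auto simp: ereal_mult_infty split: if_splits)
  hence "(\<Sum>j<n. ereal (\<alpha> j) * P (idx j)) = (\<Sum>j<n. ereal (\<alpha> j * d0 P (idx j)))"
    by (auto intro!: sum.cong)
  thus ?thesis by (simp add: sum_ereal)
qed

lemma sum_pinf:
  fixes f :: "nat \<Rightarrow> ereal"
  assumes "finite A" "a0 \<in> A" "f a0 = \<infinity>"
  shows "sum f A = \<infinity>"
  using assms by (auto simp: sum_Pinfty)

lemma sum_minf:
  fixes f :: "nat \<Rightarrow> ereal"
  assumes "finite A" "\<forall>a\<in>A. f a \<noteq> \<infinity>" "a0 \<in> A" "f a0 = -\<infinity>"
  shows "sum f A = -\<infinity>"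
proof -
  have "sum f (A - {a0}) \<noteq> \<infinity>" using assms by (auto simp: sum_Pinfty)
  moreover have "sum f A = f a0 + sum f (A - {a0})"
    using assms by (simp add: sum.remove)
  ultimately show ?thesis using assms by (cases "sum f (A - {a0})") auto
qed

lemma neg_term: "ereal (-a) * p = - (ereal a * p)"
  by (cases p) (auto simp: ereal_mult_infty)

lemma ext_to_coh:
  fixes X :: "'i \<Rightarrow> 'w \<Rightarrow> real" and P :: "'i \<Rightarrow> ereal"
  assumes ext: "extended_coherent X P"
  shows "coherent1 X P"
  unfolding coherent1_def
proof (intro allI impI)
  fix J :: "'i set" and \<alpha> c :: "'i \<Rightarrow> real"
  assume fin: "finite J"
    and s1: "\<forall>j\<in>J. P j = \<infinity> \<longrightarrow> \<alpha> j \<ge> 0"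
    and s2: "\<forall>j\<in>J. P j = -\<infinity> \<longrightarrow> \<alpha> j \<le> 0"
    and cc: "\<forall>j\<in>J. \<bar>P j\<bar> \<noteq> \<infinity> \<longrightarrow> ereal (c j) = P j"
  obtain h where bij: "bij_betw h {..<card J} J"
    using ex_bij_betw_nat_finite[OF fin] by (auto simp: atLeast0LessThan)
  define n where "n = card J"
  define a where "a j = \<alpha> (h j)" for j
  have hJ: "h j \<in> J" if "j < n" for j
    using bij that unfolding n_def bij_betw_def by auto
  have tok: "ereal (a j) * P (h j) = \<infinity> \<or> ereal (a j) * P (h j) = ereal (a j * c (h j))"
    if "j < n" for j
  proof -
    have i: "h j \<in> J" using hJ[OF that] .
    show ?thesis
    proof (cases "P (h j)")
      case (real r) then show ?thesis using cc i by (auto simp: a_def)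
    next
      case PInf then show ?thesis using s1 i by (auto simp: a_def ereal_mult_infty)
    next
      case MInf then show ?thesis using s2 i by (auto simp: a_def ereal_mult_infty)
    qed
  qed
  have cond: "\<forall>j<n. \<forall>k<n. \<bar>ereal (a j) * P (h j)\<bar> = \<infinity> \<longrightarrow> \<bar>ereal (a k) * P (h k)\<bar> = \<infinity> \<longrightarrow>
            ereal (a j) * P (h j) = ereal (a k) * P (h k)"
  proof (intro allI impI)
    have inf_is: "ereal (a j) * P (h j) = \<infinity>" if "j < n" "\<bar>ereal (a j) * P (h j)\<bar> = \<infinity>" for j
      using tok[OF that(1)] that(2) by auto
    fix j k assume "j < n" "k < n" "\<bar>ereal (a j) * P (h j)\<bar> = \<infinity>" "\<bar>ereal (a k) * P (h k)\<bar> = \<infinity>"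
    then show "ereal (a j) * P (h j) = ereal (a k) * P (h k)" using inf_is by metis
  qed
  have "(\<Sum>j<n. ereal (a j) * P (h j)) \<le> (SUP \<omega>. ereal (\<Sum>j<n. a j * X (h j) \<omega>))"
    using ext cond unfolding extended_coherent_def by blast
  moreover have "ereal (\<Sum>j<n. a j * c (h j)) \<le> (\<Sum>j<n. ereal (a j) * P (h j))"
  proof -
    have "ereal (\<Sum>j<n. a j * c (h j)) = (\<Sum>j<n. ereal (a j * c (h j)))" by simp
    also have "\<dots> \<le> (\<Sum>j<n. ereal (a j) * P (h j))"
    proof (rule sum_mono)
      fix j assume "j \<in> {..<n}"
      hence "j < n" by simp
      from tok[OF this] show "ereal (a j * c (h j)) \<le> ereal (a j) * P (h j)" by auto
    qed
    finally show ?thesis .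
  qed
  moreover have "(\<Sum>j<n. a j * c (h j)) = (\<Sum>i\<in>J. \<alpha> i * c i)"
    unfolding a_def n_def using sum.reindex_bij_betw[OF bij, of "\<lambda>i. \<alpha> i * c i"] by simp
  moreover have "\<And>\<omega>. (\<Sum>j<n. a j * X (h j) \<omega>) = (\<Sum>i\<in>J. \<alpha> i * X i \<omega>)"
    unfolding a_def n_def using sum.reindex_bij_betw[OF bij] by simp
  ultimately have le: "ereal (\<Sum>i\<in>J. \<alpha> i * c i) \<le> (SUP \<omega>. ereal (\<Sum>i\<in>J. \<alpha> i * X i \<omega>))"
    by simp
  define C where "C = (\<Sum>i\<in>J. \<alpha> i * c i)"
  have eq: "\<And>\<omega>. (\<Sum>i\<in>J. \<alpha> i * (X i \<omega> - c i)) = (\<Sum>i\<in>J. \<alpha> i * X i \<omega>) - C"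
    unfolding C_def by (simp add: algebra_simps sum_subtractf)
  show "(SUP \<omega>. ereal (\<Sum>i\<in>J. \<alpha> i * (X i \<omega> - c i))) \<ge> 0"
    unfolding eq
  proof (rule ereal_le_epsilon2)
    fix e :: real assume e: "0 < e"
    have "ereal (C - e) < (SUP \<omega>. ereal (\<Sum>i\<in>J. \<alpha> i * X i \<omega>))"
    proof -
      have "ereal (C - e) < ereal C" using e by simp
      thus ?thesis using le unfolding C_def by (rule less_le_trans)
    qed
    then obtain \<omega> where "ereal (C - e) < ereal (\<Sum>i\<in>J. \<alpha> i * X i \<omega>)"
      by (auto simp: less_SUP_iff)
    hence "0 \<le> ereal ((\<Sum>i\<in>J. \<alpha> i * X i \<omega>) - C) + ereal e" by simp
    also have "\<dots> \<le> (SUP \<omega>. ereal ((\<Sum>i\<in>J. \<alpha> i * X i \<omega>) - C)) + ereal e"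
      by (intro add_right_mono SUP_upper) auto
    finally show "0 \<le> (SUP \<omega>. ereal ((\<Sum>i\<in>J. \<alpha> i * X i \<omega>) - C)) + ereal e" .
  qed
qed

lemma coh_upper:
  fixes X :: "'i \<Rightarrow> 'w \<Rightarrow> real" and P :: "'i \<Rightarrow> ereal" and idx :: "nat \<Rightarrow> 'i"
  assumes coh: "coherent1 X P"
    and nm: "\<And>j. j < n \<Longrightarrow> ereal (\<alpha> j) * P (idx j) \<noteq> -\<infinity>"
  shows "(\<Sum>j<n. ereal (\<alpha> j) * P (idx j)) \<le> (SUP \<omega>. ereal (\<Sum>j<n. \<alpha> j * X (idx j) \<omega>))"
proof (cases "\<exists>j0<n. ereal (\<alpha> j0) * P (idx j0) = \<infinity>")
  case True
  then obtain j0 where j0: "j0 < n" "ereal (\<alpha> j0) * P (idx j0) = \<infinity>" by auto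
  have "(SUP \<omega>. ereal (\<Sum>j<n. \<alpha> j * X (idx j) \<omega>)) = \<infinity>"
  proof (rule SUP_PInfty)
    fix m :: nat
    obtain \<omega> where "(\<Sum>j<n. \<alpha> j * X (idx j) \<omega>) > real m"
      using up_inf[where n=n and idx=idx and \<alpha>=\<alpha>, OF coh nm j0] by blast
    thus "\<exists>\<omega>\<in>UNIV. ereal (real m) \<le> ereal (\<Sum>j<n. \<alpha> j * X (idx j) \<omega>)"
      by (intro bexI[of _ \<omega>]) auto
  qed
  thus ?thesis by simp
next
  case False
  hence fin: "\<And>j. j < n \<Longrightarrow> \<bar>ereal (\<alpha> j) * P (idx j)\<bar> \<noteq> \<infinity>"
    using nm by auto
  have "ereal (\<Sum>j<n. \<alpha> j * d0 P (idx j)) \<le> (SUP \<omega>. ereal (\<Sum>j<n. \<alpha> j * X (idx j) \<omega>))"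
  proof (rule ereal_le_epsilon2)
    fix e :: real assume e: "0 < e"
    obtain \<omega> where \<omega>: "(\<Sum>j<n. \<alpha> j * X (idx j) \<omega>) > (\<Sum>j<n. \<alpha> j * d0 P (idx j)) - e"
      using up_fin[where n=n and idx=idx and \<alpha>=\<alpha>, OF coh fin e] by blast
    hence "ereal (\<Sum>j<n. \<alpha> j * d0 P (idx j)) \<le> ereal (\<Sum>j<n. \<alpha> j * X (idx j) \<omega>) + ereal e"
      by simp
    also have "\<dots> \<le> (SUP \<omega>. ereal (\<Sum>j<n. \<alpha> j * X (idx j) \<omega>)) + ereal e"
      by (intro add_right_mono SUP_upper) auto
    finally show "ereal (\<Sum>j<n. \<alpha> j * d0 P (idx j)) \<le> (SUP \<omega>. ereal (\<Sum>j<n. \<alpha> j * X (idx j) \<omega>)) + ereal e" .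
  qed
  thus ?thesis using sum_fin_eq[where n=n and idx=idx and \<alpha>=\<alpha> and P=P, OF fin] by simp
qed

lemma coh_lower:
  fixes X :: "'i \<Rightarrow> 'w \<Rightarrow> real" and P :: "'i \<Rightarrow> ereal" and idx :: "nat \<Rightarrow> 'i"
  assumes coh: "coherent1 X P"
    and np: "\<And>j. j < n \<Longrightarrow> ereal (\<alpha> j) * P (idx j) \<noteq> \<infinity>"
  shows "(INF \<omega>. ereal (\<Sum>j<n. \<alpha> j * X (idx j) \<omega>)) \<le> (\<Sum>j<n. ereal (\<alpha> j) * P (idx j))"
proof (cases "\<exists>j0<n. ereal (\<alpha> j0) * P (idx j0) = -\<infinity>")
  case True
  then obtain j0 where j0: "j0 < n" "ereal (\<alpha> j0) * P (idx j0) = -\<infinity>" by auto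
  have nm': "ereal (- \<alpha> j) * P (idx j) \<noteq> -\<infinity>" if "j < n" for j
    using np[OF that] by (simp add: neg_term)
  have j0': "ereal (- \<alpha> j0) * P (idx j0) = \<infinity>" unfolding neg_term j0(2) by simp
  have "(INF \<omega>. ereal (\<Sum>j<n. \<alpha> j * X (idx j) \<omega>)) = -\<infinity>"
  proof (rule ereal_bot)
    fix B :: real
    obtain \<omega> where \<omega>: "(\<Sum>j<n. - \<alpha> j * X (idx j) \<omega>) > - B"
      using up_inf[where \<alpha>="\<lambda>j. - \<alpha> j" and n=n and idx=idx, OF coh nm' j0(1) j0'] by blast
    have "(\<Sum>j<n. - \<alpha> j * X (idx j) \<omega>) = - (\<Sum>j<n. \<alpha> j * X (idx j) \<omega>)"
      by (simp add: sum_negf)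
    hence "ereal (\<Sum>j<n. \<alpha> j * X (idx j) \<omega>) \<le> ereal B" using \<omega> by simp
    moreover have "(INF \<omega>. ereal (\<Sum>j<n. \<alpha> j * X (idx j) \<omega>)) \<le> ereal (\<Sum>j<n. \<alpha> j * X (idx j) \<omega>)"
      by (rule INF_lower) auto
    ultimately show "(INF \<omega>. ereal (\<Sum>j<n. \<alpha> j * X (idx j) \<omega>)) \<le> ereal B" by (rule order_trans[rotated])
  qed
  thus ?thesis by simp
next
  case False
  hence fin: "\<And>j. j < n \<Longrightarrow> \<bar>ereal (\<alpha> j) * P (idx j)\<bar> \<noteq> \<infinity>"
    using np by auto
  have fin': "\<bar>ereal (- \<alpha> j) * P (idx j)\<bar> \<noteq> \<infinity>" if "j < n" for j
    using fin[OF that] by (simp add: neg_term)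
  have "(INF \<omega>. ereal (\<Sum>j<n. \<alpha> j * X (idx j) \<omega>)) \<le> ereal (\<Sum>j<n. \<alpha> j * d0 P (idx j))"
  proof (rule ereal_le_epsilon2)
    fix e :: real assume e: "0 < e"
    obtain \<omega> where \<omega>: "(\<Sum>j<n. - \<alpha> j * X (idx j) \<omega>) > (\<Sum>j<n. - \<alpha> j * d0 P (idx j)) - e"
      using up_fin[where \<alpha>="\<lambda>j. - \<alpha> j" and n=n and idx=idx, OF coh fin' e] by blast
    hence "(\<Sum>j<n. \<alpha> j * X (idx j) \<omega>) \<le> (\<Sum>j<n. \<alpha> j * d0 P (idx j)) + e"
      by (simp add: sum_negf)
    hence "ereal (\<Sum>j<n. \<alpha> j * X (idx j) \<omega>) \<le> ereal (\<Sum>j<n. \<alpha> j * d0 P (idx j)) + ereal e"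
      by simp
    moreover have "(INF \<omega>. ereal (\<Sum>j<n. \<alpha> j * X (idx j) \<omega>)) \<le> ereal (\<Sum>j<n. \<alpha> j * X (idx j) \<omega>)"
      by (rule INF_lower) auto
    ultimately show "(INF \<omega>. ereal (\<Sum>j<n. \<alpha> j * X (idx j) \<omega>)) \<le> ereal (\<Sum>j<n. \<alpha> j * d0 P (idx j)) + ereal e"
      by (rule order_trans[rotated])
  qed
  thus ?thesis using sum_fin_eq[where n=n and idx=idx and \<alpha>=\<alpha> and P=P, OF fin] by simp
qed

theorem lemma3p1:
  fixes X :: "'i \<Rightarrow> 'w \<Rightarrow> real" and P :: "'i \<Rightarrow> ereal"
  shows "extended_coherent X P \<longleftrightarrow> coherent1 X P"
proof
  assume "extended_coherent X P" thus "coherent1 X P" by (rule ext_to_coh)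
next
  assume coh: "coherent1 X P"
  show "extended_coherent X P"
    unfolding extended_coherent_def
  proof (intro allI impI conjI)
    fix n :: nat and idx :: "nat \<Rightarrow> 'i" and \<alpha> :: "nat \<Rightarrow> real"
    assume cond: "\<forall>j<n. \<forall>k<n. \<bar>ereal (\<alpha> j) * P (idx j)\<bar> = \<infinity> \<longrightarrow> \<bar>ereal (\<alpha> k) * P (idx k)\<bar> = \<infinity> \<longrightarrow>
            ereal (\<alpha> j) * P (idx j) = ereal (\<alpha> k) * P (idx k)"
    show "(\<Sum>j<n. ereal (\<alpha> j) * P (idx j)) \<le> (SUP \<omega>. ereal (\<Sum>j<n. \<alpha> j * X (idx j) \<omega>))"
    proof (cases "\<exists>j0<n. ereal (\<alpha> j0) * P (idx j0) = -\<infinity>")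
      case True
      then obtain j0 where j0: "j0 < n" "ereal (\<alpha> j0) * P (idx j0) = -\<infinity>" by auto
      have "\<forall>a\<in>{..<n}. ereal (\<alpha> a) * P (idx a) \<noteq> \<infinity>"
      proof
        fix a assume a: "a \<in> {..<n}"
        show "ereal (\<alpha> a) * P (idx a) \<noteq> \<infinity>"
        proof
          assume h: "ereal (\<alpha> a) * P (idx a) = \<infinity>"
          have an: "a < n" using a by simp
          have A1: "\<bar>ereal (\<alpha> a) * P (idx a)\<bar> = \<infinity>" unfolding h by simp
          have A2: "\<bar>ereal (\<alpha> j0) * P (idx j0)\<bar> = \<infinity>" unfolding j0(2) by simp
          have "ereal (\<alpha> j0) * P (idx j0) = ereal (\<alpha> a) * P (idx a)"
            by (rule cond[rule_format, OF j0(1) an A2 A1])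
          thus False unfolding h j0(2) by simp
        qed
      qed
      hence "(\<Sum>j<n. ereal (\<alpha> j) * P (idx j)) = -\<infinity>"
        using sum_minf[of "{..<n}" "\<lambda>j. ereal (\<alpha> j) * P (idx j)" j0] j0 by auto
      thus ?thesis by simp
    next
      case False
      hence "\<And>j. j < n \<Longrightarrow> ereal (\<alpha> j) * P (idx j) \<noteq> -\<infinity>" by blast
      thus ?thesis by (rule coh_upper[OF coh])
    qed
    show "(INF \<omega>. ereal (\<Sum>j<n. \<alpha> j * X (idx j) \<omega>)) \<le> (\<Sum>j<n. ereal (\<alpha> j) * P (idx j))"
    proof (cases "\<exists>j0<n. ereal (\<alpha> j0) * P (idx j0) = \<infinity>")
      case True
      then obtain j0 where j0: "j0 < n" "ereal (\<alpha> j0) * P (idx j0) = \<infinity>" by auto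
      hence "(\<Sum>j<n. ereal (\<alpha> j) * P (idx j)) = \<infinity>"
        using sum_pinf[of "{..<n}" j0 "\<lambda>j. ereal (\<alpha> j) * P (idx j)"] by auto
      thus ?thesis by simp
    next
      case False
      hence "\<And>j. j < n \<Longrightarrow> ereal (\<alpha> j) * P (idx j) \<noteq> \<infinity>" by blast
      thus ?thesis by (rule coh_lower[OF coh])
    qed
  qed
qed

end
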